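(* Let $G=(V,E)$ be a connected Eulerian digraph and $s\in V$ any vertex. Then the degree of the parking function enumerator ${\rm park}_{G,s}$ equals $|E|-|V|+1-{\rm minfas}(G)$, where ${\rm minfas}(G)$ is the minimum cardinality of a feedback arc set of $G$. Equivalently, in the greedoid polynomial of the branching greedoid of $G$ rooted at $s$, the coefficient of $x^i$ is zero for $i=0,\dots,{\rm minfas}(G)-1$ and nonzero for $i={\rm minfas}(G)$. *)

theory Defs
  imports Main "HOL-Computational_Algebra.Polynomial"
begin

text \<open>A finite directed multigraph (loops and parallel arcs allowed) is given by a
vertex set V, an arc set E and tail/head maps tail, head on arcs.\<close>

definition digraph :: "'v set \<Rightarrow> 'e set \<Rightarrow> ('e \<Rightarrow> 'v) \<Rightarrow> ('e \<Rightarrow> 'v) \<Rightarrow> bool" where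
  "digraph V E tail head \<longleftrightarrow> finite V \<and> finite E \<and> tail ` E \<subseteq> V \<and> head ` E \<subseteq> V"

definition arcrel :: "'e set \<Rightarrow> ('e \<Rightarrow> 'v) \<Rightarrow> ('e \<Rightarrow> 'v) \<Rightarrow> ('v \<times> 'v) set" where
  "arcrel A tail head = {(tail e, head e) | e. e \<in> A}"

definition connected_digraph :: "'v set \<Rightarrow> 'e set \<Rightarrow> ('e \<Rightarrow> 'v) \<Rightarrow> ('e \<Rightarrow> 'v) \<Rightarrow> bool" where
  "connected_digraph V E tail head \<longleftrightarrow>
     (\<forall>u\<in>V. \<forall>v\<in>V. (u, v) \<in> (arcrel E tail head \<union> (arcrel E tail head)\<inverse>)\<^sup>*)"

definition eulerian :: "'v set \<Rightarrow> 'e set \<Rightarrow> ('e \<Rightarrow> 'v) \<Rightarrow> ('e \<Rightarrow> 'v) \<Rightarrow> bool" where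
  "eulerian V E tail head \<longleftrightarrow>
     (\<forall>v\<in>V. card {e\<in>E. tail e = v} = card {e\<in>E. head e = v})"

definition has_dicycle :: "'e set \<Rightarrow> ('e \<Rightarrow> 'v) \<Rightarrow> ('e \<Rightarrow> 'v) \<Rightarrow> bool" where
  "has_dicycle A tail head \<longleftrightarrow>
     (\<exists>es. es \<noteq> [] \<and> set es \<subseteq> A \<and>
        (\<forall>i < length es. head (es ! i) = tail (es ! ((i + 1) mod length es))))"

definition feedback_arc_set :: "'e set \<Rightarrow> ('e \<Rightarrow> 'v) \<Rightarrow> ('e \<Rightarrow> 'v) \<Rightarrow> 'e set \<Rightarrow> bool" where
  "feedback_arc_set E tail head F \<longleftrightarrow> F \<subseteq> E \<and> \<not> has_dicycle (E - F) tail head"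

definition minfas :: "'e set \<Rightarrow> ('e \<Rightarrow> 'v) \<Rightarrow> ('e \<Rightarrow> 'v) \<Rightarrow> nat" where
  "minfas E tail head = Min (card ` {F. feedback_arc_set E tail head F})"

definition parking_functions ::
  "'v set \<Rightarrow> 'e set \<Rightarrow> ('e \<Rightarrow> 'v) \<Rightarrow> ('e \<Rightarrow> 'v) \<Rightarrow> 'v \<Rightarrow> ('v \<Rightarrow> nat) set" where
  "parking_functions V E tail head s =
     {f. (\<forall>v. v \<notin> V - {s} \<longrightarrow> f v = 0) \<and>
         (\<forall>S. S \<subseteq> V - {s} \<and> S \<noteq> {} \<longrightarrow>
              (\<exists>v\<in>S. f v < card {e\<in>E. head e = v \<and> tail e \<notin> S}))}"

definition park :: "'v set \<Rightarrow> 'e set \<Rightarrow> ('e \<Rightarrow> 'v) \<Rightarrow> ('e \<Rightarrow> 'v) \<Rightarrow> 'v \<Rightarrow> int poly" where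
  "park V E tail head s =
     (\<Sum>f\<in>parking_functions V E tail head s. monom 1 (\<Sum>v\<in>V - {s}. f v))"

text \<open>Feasible sets of the branching greedoid rooted at s: arc sets forming an
  arborescence rooted at s (all arcs directed away from s).\<close>
definition branching :: "'e set \<Rightarrow> ('e \<Rightarrow> 'v) \<Rightarrow> ('e \<Rightarrow> 'v) \<Rightarrow> 'v \<Rightarrow> 'e set \<Rightarrow> bool" where
  "branching E tail head s A \<longleftrightarrow>
     A \<subseteq> E \<and> inj_on head A \<and> s \<notin> head ` A \<and>
     (\<forall>e\<in>A. (s, head e) \<in> (arcrel A tail head)\<^sup>*)"

definition branching_rank :: "'e set \<Rightarrow> ('e \<Rightarrow> 'v) \<Rightarrow> ('e \<Rightarrow> 'v) \<Rightarrow> 'v \<Rightarrow> 'e set \<Rightarrow> nat" where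
  "branching_rank E tail head s A = Max (card ` {B. B \<subseteq> A \<and> branching E tail head s B})"

text \<open>Greedoid polynomial (Bjoerner-Korte-Lovasz), in the Tutte-polynomial form
  lambda(x) = f(1, x - 1) = sum over A \<subseteq> E with r(A) = r(E) of (x-1)^(|A| - r(A)).\<close>
definition greedoid_poly_branching ::
  "'e set \<Rightarrow> ('e \<Rightarrow> 'v) \<Rightarrow> ('e \<Rightarrow> 'v) \<Rightarrow> 'v \<Rightarrow> int poly" where
  "greedoid_poly_branching E tail head s =
     (\<Sum>A\<in>{A. A \<subseteq> E \<and> branching_rank E tail head s A = branching_rank E tail head s E}.
        [:-1, 1:] ^ (card A - branching_rank E tail head s A))"

end

theory Submission
  imports Defs
begin

locale EG =
  fixes V :: "'v set" and E :: "'e set" and tail head :: "'e \<Rightarrow> 'v" and s :: 'v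
  assumes dg: "digraph V E tail head"
    and conn: "connected_digraph V E tail head"
    and eul: "eulerian V E tail head"
    and sV: "s \<in> V"
begin

lemma finV: "finite V" and finE: "finite E"
  using dg by (auto simp: digraph_def)

lemma tailV: "e \<in> E \<Longrightarrow> tail e \<in> V" and headV: "e \<in> E \<Longrightarrow> head e \<in> V"
  using dg by (auto simp: digraph_def)

lemma card_tail_sum: "X \<subseteq> V \<Longrightarrow> card {e\<in>E. tail e \<in> X} = (\<Sum>v\<in>X. card {e\<in>E. tail e = v})"
proof -
  assume X: "X \<subseteq> V"
  have fX: "finite X" using X finV finite_subset by blast
  have "{e\<in>E. tail e \<in> X} = (\<Union>v\<in>X. {e\<in>E. tail e = v})" by auto
  moreover have "card (\<Union>v\<in>X. {e\<in>E. tail e = v}) = (\<Sum>v\<in>X. card {e\<in>E. tail e = v})"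
    by (rule card_UN_disjoint) (use fX finE in auto)
  ultimately show ?thesis by simp
qed

lemma card_head_sum: "X \<subseteq> V \<Longrightarrow> card {e\<in>E. head e \<in> X} = (\<Sum>v\<in>X. card {e\<in>E. head e = v})"
proof -
  assume X: "X \<subseteq> V"
  have fX: "finite X" using X finV finite_subset by blast
  have "{e\<in>E. head e \<in> X} = (\<Union>v\<in>X. {e\<in>E. head e = v})" by auto
  moreover have "card (\<Union>v\<in>X. {e\<in>E. head e = v}) = (\<Sum>v\<in>X. card {e\<in>E. head e = v})"
    by (rule card_UN_disjoint) (use fX finE in auto)
  ultimately show ?thesis by simp
qed

lemma cut: assumes X: "X \<subseteq> V"
  shows "card {e\<in>E. tail e \<in> X \<and> head e \<notin> X} = card {e\<in>E. head e \<in> X \<and> tail e \<notin> X}"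
proof -
  have eq: "card {e\<in>E. tail e \<in> X} = card {e\<in>E. head e \<in> X}"
    using card_tail_sum[OF X] card_head_sum[OF X] eul X unfolding eulerian_def
    by (metis (no_types, lifting) subsetD sum.cong)
  have a: "{e\<in>E. tail e \<in> X} = {e\<in>E. tail e \<in> X \<and> head e \<in> X} \<union> {e\<in>E. tail e \<in> X \<and> head e \<notin> X}" by auto
  have b: "{e\<in>E. head e \<in> X} = {e\<in>E. tail e \<in> X \<and> head e \<in> X} \<union> {e\<in>E. head e \<in> X \<and> tail e \<notin> X}" by auto
  have ca: "card {e\<in>E. tail e \<in> X} = card {e\<in>E. tail e \<in> X \<and> head e \<in> X} + card {e\<in>E. tail e \<in> X \<and> head e \<notin> X}"
    unfolding a by (rule card_Un_disjoint) (use finE in auto)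
  have cb: "card {e\<in>E. head e \<in> X} = card {e\<in>E. tail e \<in> X \<and> head e \<in> X} + card {e\<in>E. head e \<in> X \<and> tail e \<notin> X}"
    unfolding b by (rule card_Un_disjoint) (use finE in auto)
  show ?thesis using eq ca cb by simp
qed

lemma rtrancl_leave: "(x, y) \<in> r\<^sup>* \<Longrightarrow> x \<in> P \<Longrightarrow> y \<notin> P \<Longrightarrow> \<exists>a b. (a, b) \<in> r \<and> a \<in> P \<and> b \<notin> P"
  by (induction rule: rtrancl_induct) auto

lemma crossing: assumes "P \<subseteq> V" "p \<in> P" "q \<in> V" "q \<notin> P"
  shows "\<exists>e\<in>E. (tail e \<in> P \<and> head e \<notin> P) \<or> (head e \<in> P \<and> tail e \<notin> P)"
proof -
  have "(p, q) \<in> (arcrel E tail head \<union> (arcrel E tail head)\<inverse>)\<^sup>*"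
    using conn assms unfolding connected_digraph_def by blast
  from rtrancl_leave[OF this assms(2,4)] obtain a b where
    ab: "(a, b) \<in> arcrel E tail head \<union> (arcrel E tail head)\<inverse>" "a \<in> P" "b \<notin> P" by blast
  then show ?thesis unfolding arcrel_def by auto
qed

lemma leaving: assumes "P \<subseteq> V" "P \<noteq> {}" "P \<noteq> V"
  shows "\<exists>e\<in>E. tail e \<in> P \<and> head e \<notin> P"
proof (rule ccontr)
  assume no: "\<not> ?thesis"
  obtain p q where pq: "p \<in> P" "q \<in> V" "q \<notin> P" using assms by blast
  have "{e\<in>E. tail e \<in> P \<and> head e \<notin> P} = {}" using no by auto
  hence "card {e\<in>E. head e \<in> P \<and> tail e \<notin> P} = 0"
    using cut[OF assms(1)] by (metis card.empty)
  hence "{e\<in>E. head e \<in> P \<and> tail e \<notin> P} = {}" using finE by simp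
  with crossing[OF assms(1) pq] no show False by blast
qed

end

lemma fwd_acyclic:
  fixes \<tau> :: "'v \<Rightarrow> nat"
  assumes fw: "\<forall>e\<in>A. \<tau> (tail e) < \<tau> (head e)"
  shows "\<not> has_dicycle A tail head"
proof
  assume "has_dicycle A tail head"
  then obtain es where es: "es \<noteq> []" "set es \<subseteq> A"
    "\<forall>i < length es. head (es ! i) = tail (es ! ((i + 1) mod length es))"
    unfolding has_dicycle_def by blast
  define L where "L = length es"
  have L0: "L > 0" using es(1) L_def by simp
  have ain: "\<And>i. i < L \<Longrightarrow> es ! i \<in> A" using es(2) L_def by auto
  have claim: "\<And>i. i < L \<Longrightarrow> \<tau> (tail (es ! 0)) + i \<le> \<tau> (tail (es ! i))"
  proof -
    fix i show "i < L \<Longrightarrow> \<tau> (tail (es ! 0)) + i \<le> \<tau> (tail (es ! i))"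
    proof (induction i)
      case 0 then show ?case by simp
    next
      case (Suc i)
      have "head (es ! i) = tail (es ! ((i + 1) mod L))" using es(3) Suc.prems L_def by simp
      moreover have "(i + 1) mod L = Suc i" using Suc.prems by simp
      moreover have "\<tau> (tail (es ! i)) < \<tau> (head (es ! i))" using fw ain Suc.prems by simp
      ultimately show ?case using Suc by simp
    qed
  qed
  have l1: "L - 1 < L" using L0 by simp
  have "head (es ! (L - 1)) = tail (es ! ((L - 1 + 1) mod L))" using es(3) l1 L_def by simp
  also have "(L - 1 + 1) mod L = 0" using L0 by simp
  finally have h: "head (es ! (L - 1)) = tail (es ! 0)" .
  have "\<tau> (tail (es ! (L - 1))) < \<tau> (head (es ! (L - 1)))" using fw ain l1 by simp
  with claim[OF l1] h show False by simp
qed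

lemma trancl_walk:
  assumes "(u, v) \<in> (arcrel A tail head)\<^sup>+"
  shows "\<exists>es. es \<noteq> [] \<and> set es \<subseteq> A \<and> tail (hd es) = u \<and> head (last es) = v \<and>
           (\<forall>i. Suc i < length es \<longrightarrow> head (es ! i) = tail (es ! Suc i))"
  using assms
proof (induction rule: trancl_induct)
  case (base y)
  then obtain e where "e \<in> A" "tail e = u" "head e = y" unfolding arcrel_def by blast
  then show ?case by (intro exI[of _ "[e]"]) auto
next
  case (step y z)
  then obtain es where es: "es \<noteq> []" "set es \<subseteq> A" "tail (hd es) = u" "head (last es) = y"
    "\<forall>i. Suc i < length es \<longrightarrow> head (es ! i) = tail (es ! Suc i)" by blast
  from step obtain e where e: "e \<in> A" "tail e = y" "head e = z" unfolding arcrel_def by blast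
  show ?case
  proof (intro exI[of _ "es @ [e]"] conjI allI impI)
    fix i assume i: "Suc i < length (es @ [e])"
    show "head ((es @ [e]) ! i) = tail ((es @ [e]) ! Suc i)"
    proof (cases "Suc i < length es")
      case True then show ?thesis using es(5) by (simp add: nth_append)
    next
      case False
      then have "i = length es - 1" using i by simp
      then show ?thesis using es(1,4) e by (simp add: nth_append last_conv_nth)
    qed
  qed (use es e in auto)
qed

lemma selfloop_cycle:
  assumes "(u, u) \<in> (arcrel A tail head)\<^sup>+"
  shows "has_dicycle A tail head"
proof -
  obtain es where es: "es \<noteq> []" "set es \<subseteq> A" "tail (hd es) = u" "head (last es) = u"
    "\<forall>i. Suc i < length es \<longrightarrow> head (es ! i) = tail (es ! Suc i)"
    using trancl_walk[OF assms] by blast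
  have "\<forall>i < length es. head (es ! i) = tail (es ! ((i + 1) mod length es))"
  proof (intro allI impI)
    fix i assume i: "i < length es"
    show "head (es ! i) = tail (es ! ((i + 1) mod length es))"
    proof (cases "Suc i < length es")
      case True then show ?thesis using es(5) by simp
    next
      case False
      then have "Suc i = length es" using i by simp
      then show ?thesis using es(1,3,4)
        by (metis Suc_eq_plus1 diff_Suc_1 hd_conv_nth last_conv_nth mod_self)
    qed
  qed
  then show ?thesis unfolding has_dicycle_def using es by blast
qed

context EG begin

lemma topo:
  assumes A: "A \<subseteq> E" and ac: "\<not> has_dicycle A tail head"
  shows "\<exists>pos::'v\<Rightarrow>nat. \<forall>e\<in>A. pos (tail e) < pos (head e)"
proof -
  define anc where "anc v = {u. (u, v) \<in> (arcrel A tail head)\<^sup>+}" for v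
  have sub: "anc v \<subseteq> V" for v
  proof
    fix u assume "u \<in> anc v"
    then have "(u, v) \<in> (arcrel A tail head)\<^sup>+" unfolding anc_def by simp
    then obtain w where "(u, w) \<in> arcrel A tail head" by (meson tranclD)
    then show "u \<in> V" using A tailV unfolding arcrel_def by auto
  qed
  have "\<forall>e\<in>A. card (anc (tail e)) < card (anc (head e))"
  proof
    fix e assume e: "e \<in> A"
    have ar: "(tail e, head e) \<in> arcrel A tail head" using e unfolding arcrel_def by blast
    have "anc (tail e) \<subseteq> anc (head e)" unfolding anc_def using ar
      by (auto intro: trancl_into_trancl)
    moreover have "tail e \<in> anc (head e)" unfolding anc_def using ar by auto
    moreover have "tail e \<notin> anc (tail e)" unfolding anc_def using selfloop_cycle[of "tail e" A tail head] ac by auto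
    ultimately have "anc (tail e) \<subset> anc (head e)" by blast
    then show "card (anc (tail e)) < card (anc (head e))"
      using sub finV by (meson finite_subset psubset_card_mono)
  qed
  then show ?thesis by (intro exI[of _ "\<lambda>v. card (anc v)"]) simp
qed

definition fasset :: "'e set set" where "fasset = {F. feedback_arc_set E tail head F}"

lemma fasset_fin: "finite fasset"
proof -
  have "fasset \<subseteq> Pow E" unfolding fasset_def feedback_arc_set_def by auto
  then show ?thesis using finE by (meson finite_Pow_iff finite_subset)
qed

lemma E_fas: "feedback_arc_set E tail head E"
  unfolding feedback_arc_set_def has_dicycle_def by auto

lemma minfas_le: "feedback_arc_set E tail head F \<Longrightarrow> minfas E tail head \<le> card F"
  unfolding minfas_def using fasset_fin unfolding fasset_def by auto

lemma minfas_ex: "\<exists>F. feedback_arc_set E tail head F \<and> card F = minfas E tail head"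
proof -
  have "minfas E tail head \<in> card ` fasset"
    unfolding minfas_def fasset_def[symmetric]
    by (rule Min_in) (use fasset_fin E_fas fasset_def in auto)
  then show ?thesis unfolding fasset_def by auto
qed

definition Bw :: "('v \<Rightarrow> nat) \<Rightarrow> 'e set" where
  "Bw pos = {e\<in>E. pos (head e) \<le> pos (tail e)}"

lemma Bw_fas: "feedback_arc_set E tail head (Bw pos)"
  unfolding feedback_arc_set_def Bw_def
  by (rule conjI, blast, rule fwd_acyclic[of _ pos]) auto

lemma bw_ge: "minfas E tail head \<le> card (Bw pos)"
  using minfas_le Bw_fas by blast

lemma bw_ex: "\<exists>pos. card (Bw pos) = minfas E tail head"
proof -
  obtain F where F: "feedback_arc_set E tail head F" "card F = minfas E tail head"
    using minfas_ex by blast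
  obtain pos :: "'v \<Rightarrow> nat" where pos: "\<forall>e\<in>E - F. pos (tail e) < pos (head e)"
    using topo[of "E - F"] F(1) unfolding feedback_arc_set_def by auto
  have "Bw pos \<subseteq> F" unfolding Bw_def using pos by force
  then have "card (Bw pos) \<le> card F"
    using F(1) finE unfolding feedback_arc_set_def by (meson card_mono finite_subset)
  then show ?thesis using bw_ge[of pos] F(2) by (intro exI[of _ pos]) simp
qed

lemma move:
  assumes P: "P \<subseteq> V"
    and bwPQ: "\<forall>e\<in>E. tail e \<in> P \<and> head e \<in> V - P \<longrightarrow> pos (head e) \<le> pos (tail e)"
    and K: "\<forall>v\<in>V. pos v < K"
  shows "card (Bw (\<lambda>v. if v \<in> V - P then pos v + K else pos v)) \<le> card (Bw pos)"
proof -
  define Q where "Q = V - P"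
  define pos' where "pos' = (\<lambda>v. if v \<in> Q then pos v + K else pos v)"
  define PQ where "PQ = {e\<in>E. tail e \<in> P \<and> head e \<in> Q}"
  define QP where "QP = {e\<in>E. tail e \<in> Q \<and> head e \<in> P}"
  define In where "In = {e\<in>Bw pos. (tail e \<in> P \<and> head e \<in> P) \<or> (tail e \<in> Q \<and> head e \<in> Q)}"
  have cQP: "card QP = card PQ"
  proof -
    have "Q \<subseteq> V" unfolding Q_def by auto
    from cut[OF this] have "card {e\<in>E. tail e \<in> Q \<and> head e \<notin> Q} = card {e\<in>E. head e \<in> Q \<and> tail e \<notin> Q}" .
    moreover have "{e\<in>E. tail e \<in> Q \<and> head e \<notin> Q} = QP"
      unfolding QP_def Q_def using headV P by auto
    moreover have "{e\<in>E. head e \<in> Q \<and> tail e \<notin> Q} = PQ"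
      unfolding PQ_def Q_def using tailV P by auto
    ultimately show ?thesis by simp
  qed
  have sub1: "Bw pos' \<subseteq> In \<union> QP"
  proof
    fix e assume e: "e \<in> Bw pos'"
    then have eE: "e \<in> E" and le: "pos' (head e) \<le> pos' (tail e)" unfolding Bw_def by auto
    have tV: "tail e \<in> V" and hV: "head e \<in> V" using eE tailV headV by auto
    show "e \<in> In \<union> QP"
    proof (cases "tail e \<in> Q")
      case tQ: True
      show ?thesis
      proof (cases "head e \<in> Q")
        case True then show ?thesis using tQ le eE unfolding In_def Bw_def pos'_def by auto
      next
        case False then show ?thesis using tQ eE hV unfolding QP_def Q_def by auto
      qed
    next
      case tP: False
      show ?thesis
      proof (cases "head e \<in> Q")
        case True
        then have "pos' (tail e) < pos' (head e)" using tP K tV unfolding pos'_def by auto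
        then show ?thesis using le by simp
      next
        case False then show ?thesis using tP le eE tV hV unfolding In_def Bw_def pos'_def Q_def by auto
      qed
    qed
  qed
  have sub2: "In \<union> PQ \<subseteq> Bw pos"
    unfolding In_def PQ_def Bw_def Q_def using bwPQ by auto
  have fin: "finite (Bw pos)" "finite (Bw pos')" using finE unfolding Bw_def by auto
  have finIn: "finite In" "finite PQ" "finite QP" using finE unfolding In_def PQ_def QP_def Bw_def by auto
  have dis: "In \<inter> PQ = {}" unfolding In_def PQ_def Q_def by auto
  have "card (Bw pos') \<le> card (In \<union> QP)" by (rule card_mono) (use finIn sub1 in auto)
  also have "\<dots> \<le> card In + card QP" by (rule card_Un_le)
  also have "\<dots> = card (In \<union> PQ)" using cQP card_Un_disjoint[OF finIn(1,2) dis] by simp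
  also have "\<dots> \<le> card (Bw pos)" by (rule card_mono) (use fin sub2 in auto)
  finally show ?thesis unfolding pos'_def Q_def .
qed

end

context EG begin

abbreviation "m \<equiv> minfas E tail head"

definition good :: "('v \<Rightarrow> nat) \<Rightarrow> bool" where
  "good pos \<longleftrightarrow> card (Bw pos) = m \<and> (\<forall>v\<in>V - {s}. pos s < pos v)"

definition fwr :: "('v \<Rightarrow> nat) \<Rightarrow> ('v \<times> 'v) set" where
  "fwr pos = {(tail e, head e) | e. e \<in> E \<and> pos (tail e) < pos (head e)}"

definition FR :: "('v \<Rightarrow> nat) \<Rightarrow> 'v set" where
  "FR pos = {v. (s, v) \<in> (fwr pos)\<^sup>*}"

lemma FR_sub: "FR pos \<subseteq> V"
proof
  fix v assume "v \<in> FR pos"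
  then have "(s, v) \<in> (fwr pos)\<^sup>*" unfolding FR_def by simp
  then show "v \<in> V"
    by (induction rule: rtrancl_induct) (use sV headV in \<open>auto simp: fwr_def\<close>)
qed

lemma K_ex: "\<exists>K. \<forall>v\<in>V. (pos::'v\<Rightarrow>nat) v < K"
proof -
  have "\<forall>v\<in>V. pos v < Suc (Max (pos ` V))" using finV by (simp add: le_imp_less_Suc)
  then show ?thesis by blast
qed

lemma good_ex: "\<exists>pos. good pos"
proof -
  obtain pos0 where p0: "card (Bw pos0) = m" using bw_ex by blast
  obtain K where K: "\<forall>v\<in>V. pos0 v < K" using K_ex by blast
  define Q where "Q = {v\<in>V - {s}. pos0 v \<le> pos0 s}"
  define P where "P = V - Q"
  have PV: "P \<subseteq> V" unfolding P_def by auto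
  have VP: "V - P = Q" unfolding P_def Q_def by auto
  have sP: "s \<in> P" unfolding P_def Q_def using sV by auto
  have bwPQ: "\<forall>e\<in>E. tail e \<in> P \<and> head e \<in> V - P \<longrightarrow> pos0 (head e) \<le> pos0 (tail e)"
    unfolding VP unfolding P_def Q_def using tailV by fastforce
  define pos where "pos = (\<lambda>v. if v \<in> V - P then pos0 v + K else pos0 v)"
  have "card (Bw pos) \<le> card (Bw pos0)" unfolding pos_def by (rule move[OF PV bwPQ K])
  then have "card (Bw pos) = m" using bw_ge[of pos] p0 by simp
  moreover have "\<forall>v\<in>V - {s}. pos s < pos v"
  proof
    fix v assume v: "v \<in> V - {s}"
    have ps: "pos s = pos0 s" using sP unfolding pos_def by simp
    show "pos s < pos v"
    proof (cases "v \<in> Q")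
      case True then show ?thesis using ps K sV unfolding pos_def VP by auto
    next
      case False then show ?thesis using ps v unfolding pos_def VP Q_def by auto
    qed
  qed
  ultimately show ?thesis unfolding good_def by blast
qed

lemma good_full_aux:
  "\<forall>pos. good pos \<and> card (V - FR pos) = k \<longrightarrow> (\<exists>pos'. good pos' \<and> FR pos' = V)"
proof (induction k rule: less_induct)
  case (less k)
  show ?case
  proof (intro allI impI)
    fix pos assume a: "good pos \<and> card (V - FR pos) = k"
    show "\<exists>pos'. good pos' \<and> FR pos' = V"
    proof (cases "FR pos = V")
      case True then show ?thesis using a by blast
    next
      case False
      define P where "P = FR pos"
      have PV: "P \<subseteq> V" unfolding P_def by (rule FR_sub)
      have sP: "s \<in> P" unfolding P_def FR_def by simp
      have PnV: "P \<noteq> V" using False P_def by simp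
      obtain K where K: "\<forall>v\<in>V. pos v < K" using K_ex by blast
      have bwPQ: "\<forall>e\<in>E. tail e \<in> P \<and> head e \<in> V - P \<longrightarrow> pos (head e) \<le> pos (tail e)"
      proof (intro ballI impI)
        fix e assume e: "e \<in> E" "tail e \<in> P \<and> head e \<in> V - P"
        show "pos (head e) \<le> pos (tail e)"
        proof (rule ccontr)
          assume "\<not> ?thesis"
          then have "(tail e, head e) \<in> fwr pos" using e unfolding fwr_def by auto
          then have "head e \<in> FR pos" using e unfolding P_def FR_def
            by (auto intro: rtrancl_into_rtrancl)
          then show False using e P_def by auto
        qed
      qed
      define pos' where "pos' = (\<lambda>v. if v \<in> V - P then pos v + K else pos v)"
      have "card (Bw pos') \<le> card (Bw pos)" unfolding pos'_def by (rule move[OF PV bwPQ K])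
      then have bw': "card (Bw pos') = m" using bw_ge[of pos'] a unfolding good_def by simp
      have ps: "pos' s = pos s" using sP unfolding pos'_def by simp
      have first: "\<forall>v\<in>V - {s}. pos' s < pos' v"
      proof
        fix v assume v: "v \<in> V - {s}"
        then have "pos s < pos v" using a unfolding good_def by auto
        then show "pos' s < pos' v" using ps unfolding pos'_def by auto
      qed
      have good': "good pos'" using bw' first unfolding good_def by simp
      have FRsub: "FR pos \<subseteq> FR pos'"
      proof
        fix v assume "v \<in> FR pos"
        then have "(s, v) \<in> (fwr pos)\<^sup>*" unfolding FR_def by simp
        then have "(s, v) \<in> (fwr pos')\<^sup>* \<and> v \<in> P"
        proof (induction rule: rtrancl_induct)
          case base then show ?case using sP by simp
        next
          case (step y z)
          then have zP: "z \<in> P" unfolding P_def FR_def using rtrancl_into_rtrancl by fastforce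
          have "(y, z) \<in> fwr pos'" using step(2) zP step(3) unfolding fwr_def pos'_def by auto
          then show ?case using step zP by (auto intro: rtrancl_into_rtrancl)
        qed
        then show "v \<in> FR pos'" unfolding FR_def by simp
      qed
      obtain e where e: "e \<in> E" "tail e \<in> P" "head e \<notin> P"
        using leaving[OF PV _ PnV] sP by blast
      have hV: "head e \<in> V" using e headV by simp
      have "(tail e, head e) \<in> fwr pos'" using e hV K tailV unfolding fwr_def pos'_def by fastforce
      moreover have "(s, tail e) \<in> (fwr pos')\<^sup>*" using FRsub e unfolding P_def FR_def by auto
      ultimately have "head e \<in> FR pos'" unfolding FR_def by (auto intro: rtrancl_into_rtrancl)
      then have "V - FR pos' \<subset> V - FR pos" using FRsub e hV P_def by auto
      then have "card (V - FR pos') < k" using a finV by (metis finite_Diff psubset_card_mono)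
      then show ?thesis using less good' by blast
    qed
  qed
qed

lemma good_full: "\<exists>pos. good pos \<and> FR pos = V"
  using good_ex good_full_aux by blast

lemma valid: assumes "FR pos = V" "v \<in> V - {s}"
  shows "\<exists>e\<in>E. head e = v \<and> pos (tail e) < pos v"
proof -
  have "(s, v) \<in> (fwr pos)\<^sup>*" using assms unfolding FR_def by auto
  then obtain y where "(y, v) \<in> fwr pos" using assms(2)
    by (metis DiffE insertCI rtranclE)
  then show ?thesis unfolding fwr_def by auto
qed

end

context EG begin

abbreviation "PF \<equiv> parking_functions V E tail head s"

definition level :: "('v \<Rightarrow> nat) \<Rightarrow> nat" where "level f = (\<Sum>v\<in>V - {s}. f v)"

lemma card_fw: "card (Bw pos) + card {e\<in>E. pos (tail e) < pos (head e)} = card E"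
proof -
  have "E = Bw pos \<union> {e\<in>E. pos (tail e) < pos (head e)}" unfolding Bw_def by auto
  moreover have "Bw pos \<inter> {e\<in>E. pos (tail e) < pos (head e)} = {}" unfolding Bw_def by auto
  ultimately show ?thesis using finE
    by (metis (no_types, lifting) card_Un_disjoint finite_Un)
qed

lemma park_gen:
  assumes f: "f \<in> PF"
  shows "S \<subseteq> V - {s} \<Longrightarrow> \<exists>pos::'v\<Rightarrow>nat. (\<Sum>v\<in>S. f v) + card S \<le>
     card {e\<in>E. head e \<in> S \<and> (tail e \<notin> S \<or> pos (tail e) < pos (head e))}"
proof (induction "card S" arbitrary: S)
  case 0
  then have "S = {}" using finV by (metis card_0_eq finite_Diff finite_subset)
  then show ?case by simp
next
  case (Suc k)
  have fS: "finite S" using Suc.prems finV finite_subset by blast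
  have Sne: "S \<noteq> {}" using Suc.hyps(2) by auto
  obtain v where v: "v \<in> S" "f v < card {e\<in>E. head e = v \<and> tail e \<notin> S}"
    using f Suc.prems Sne unfolding parking_functions_def by blast
  define S' where "S' = S - {v}"
  have cS': "card S' = k" using Suc.hyps(2) v(1) fS unfolding S'_def by simp
  obtain pos' :: "'v \<Rightarrow> nat" where p': "(\<Sum>v\<in>S'. f v) + card S' \<le>
     card {e\<in>E. head e \<in> S' \<and> (tail e \<notin> S' \<or> pos' (tail e) < pos' (head e))}"
    using Suc.hyps(1)[of S'] cS' Suc.prems unfolding S'_def by auto
  define pos where "pos = (\<lambda>u. if u = v then 0 else pos' u + 1)"
  define A1 where "A1 = {e\<in>E. head e = v \<and> tail e \<notin> S}"
  define A2 where "A2 = {e\<in>E. head e \<in> S' \<and> (tail e \<notin> S' \<or> pos' (tail e) < pos' (head e))}"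
  define A where "A = {e\<in>E. head e \<in> S \<and> (tail e \<notin> S \<or> pos (tail e) < pos (head e))}"
  have sub: "A1 \<union> A2 \<subseteq> A"
  proof
    fix e assume "e \<in> A1 \<union> A2"
    then show "e \<in> A"
    proof
      assume "e \<in> A1" then show ?thesis unfolding A1_def A_def using v by auto
    next
      assume e: "e \<in> A2"
      then have hS': "head e \<in> S'" unfolding A2_def by auto
      then have hv: "head e \<noteq> v" "head e \<in> S" unfolding S'_def by auto
      show ?thesis
      proof (cases "tail e = v")
        case True then show ?thesis using e hv unfolding A2_def A_def pos_def by auto
      next
        case False then show ?thesis using e hv unfolding A2_def A_def pos_def S'_def by auto
      qed
    qed
  qed
  have dis: "A1 \<inter> A2 = {}" unfolding A1_def A2_def S'_def by auto
  have fin: "finite A1" "finite A2" "finite A" using finE unfolding A1_def A2_def A_def by auto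
  have "(\<Sum>v\<in>S. f v) + card S = f v + 1 + ((\<Sum>v\<in>S'. f v) + card S')"
    using fS v(1) cS' Suc.hyps(2) unfolding S'_def by (simp add: sum.remove)
  also have "\<dots> \<le> card A1 + card A2" using v(2) p' unfolding A1_def A2_def by simp
  also have "\<dots> = card (A1 \<union> A2)" using card_Un_disjoint[OF fin(1,2) dis] by simp
  also have "\<dots> \<le> card A" using card_mono[OF fin(3) sub] .
  finally show ?case unfolding A_def by blast
qed

lemma park_bound: assumes f: "f \<in> PF" shows "level f + (card V - 1) + m \<le> card E"
proof -
  obtain pos :: "'v \<Rightarrow> nat" where p: "(\<Sum>v\<in>V-{s}. f v) + card (V-{s}) \<le>
     card {e\<in>E. head e \<in> V-{s} \<and> (tail e \<notin> V-{s} \<or> pos (tail e) < pos (head e))}"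
    using park_gen[OF f, of "V - {s}"] by auto
  define pos2 where "pos2 = (\<lambda>u. if u = s then 0 else pos u + 1)"
  have sub: "{e\<in>E. head e \<in> V-{s} \<and> (tail e \<notin> V-{s} \<or> pos (tail e) < pos (head e))}
     \<subseteq> {e\<in>E. pos2 (tail e) < pos2 (head e)}"
    unfolding pos2_def using tailV by auto
  have "card {e\<in>E. head e \<in> V-{s} \<and> (tail e \<notin> V-{s} \<or> pos (tail e) < pos (head e))}
     \<le> card {e\<in>E. pos2 (tail e) < pos2 (head e)}" by (rule card_mono) (use finE sub in auto)
  moreover have "card (V - {s}) = card V - 1" using sV finV by simp
  moreover note card_fw[of pos2] bw_ge[of pos2]
  ultimately show ?thesis using p unfolding level_def by linarith
qed

lemma park_max: "\<exists>f\<in>PF. level f + (card V - 1) + m = card E"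
proof -
  obtain pos where g: "good pos" and fr: "FR pos = V" using good_full by blast
  define c where "c v = card {e\<in>E. head e = v \<and> pos (tail e) < pos v}" for v
  define f where "f v = (if v \<in> V - {s} then c v - 1 else 0)" for v
  have c1: "c v \<ge> 1" if vV: "v \<in> V - {s}" for v
  proof -
    obtain e where "e \<in> E" "head e = v" "pos (tail e) < pos v" using valid[OF fr vV] by blast
    then have "{e\<in>E. head e = v \<and> pos (tail e) < pos v} \<noteq> {}" by blast
    then show ?thesis unfolding c_def using finE by (simp add: Suc_leI card_gt_0_iff)
  qed
  have fPF: "f \<in> PF"
    unfolding parking_functions_def
  proof (intro CollectI conjI allI impI)
    fix v assume "v \<notin> V - {s}" then show "f v = 0" unfolding f_def by auto
  next
    fix S assume S: "S \<subseteq> V - {s} \<and> S \<noteq> {}"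
    have fS: "finite S" using S finV finite_subset by blast
    have "Min (pos ` S) \<in> pos ` S" using fS S by (intro Min_in) auto
    then obtain v where v0: "v \<in> S" "pos v = Min (pos ` S)" by auto
    then have v: "v \<in> S" "\<forall>u\<in>S. pos v \<le> pos u" using fS by auto
    have vV: "v \<in> V - {s}" using S v by auto
    have "{e\<in>E. head e = v \<and> pos (tail e) < pos v} \<subseteq> {e\<in>E. head e = v \<and> tail e \<notin> S}"
      using v by force
    then have "c v \<le> card {e\<in>E. head e = v \<and> tail e \<notin> S}"
      unfolding c_def by (rule card_mono[rotated]) (use finE in auto)
    then have "f v < card {e\<in>E. head e = v \<and> tail e \<notin> S}" using c1[OF vV] vV unfolding f_def by simp
    then show "\<exists>v\<in>S. f v < card {e\<in>E. head e = v \<and> tail e \<notin> S}" using v by blast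
  qed
  have lev: "level f + card (V - {s}) = (\<Sum>v\<in>V - {s}. c v)"
  proof -
    have "level f + card (V - {s}) = (\<Sum>v\<in>V - {s}. f v + 1)" unfolding level_def by (subst sum.distrib) simp
    also have "\<dots> = (\<Sum>v\<in>V - {s}. c v)"
    proof (rule sum.cong)
      fix x assume x: "x \<in> V - {s}"
      then have "c x \<ge> 1" by (rule c1)
      then show "f x + 1 = c x" unfolding f_def using x by simp
    qed simp
    finally show ?thesis .
  qed
  have "(\<Sum>v\<in>V - {s}. c v) = card {e\<in>E. head e \<in> V - {s} \<and> pos (tail e) < pos (head e)}"
  proof -
    have "{e\<in>E. head e \<in> V - {s} \<and> pos (tail e) < pos (head e)} =
        (\<Union>v\<in>V - {s}. {e\<in>E. head e = v \<and> pos (tail e) < pos v})" by auto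
    moreover have "card (\<Union>v\<in>V - {s}. {e\<in>E. head e = v \<and> pos (tail e) < pos v}) = (\<Sum>v\<in>V - {s}. c v)"
      unfolding c_def by (rule card_UN_disjoint) (use finV finE in auto)
    ultimately show ?thesis by simp
  qed
  also have "{e\<in>E. head e \<in> V - {s} \<and> pos (tail e) < pos (head e)} = {e\<in>E. pos (tail e) < pos (head e)}"
  proof -
    have "head e \<noteq> s" if "e \<in> E" "pos (tail e) < pos (head e)" for e
    proof
      assume hs: "head e = s"
      have "tail e \<in> V" using that tailV by simp
      then show False using g that hs unfolding good_def
        by (metis DiffI less_asym singletonD)
    qed
    then show ?thesis using headV by auto
  qed
  finally have "level f + card (V - {s}) = card {e\<in>E. pos (tail e) < pos (head e)}" using lev by simp
  moreover have "card (V - {s}) = card V - 1" using sV finV by simp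
  moreover note card_fw[of pos]
  moreover have "card (Bw pos) = m" using g unfolding good_def by simp
  ultimately show ?thesis using fPF by (intro bexI[of _ f]) auto
qed

end

lemma coeff_sum_monom_card:
  assumes "finite X"
  shows "coeff (\<Sum>x\<in>X. monom (1::int) (g x)) i = int (card {x\<in>X. g x = i})"
proof -
  have "coeff (\<Sum>x\<in>X. monom (1::int) (g x)) i = (\<Sum>x\<in>X. if g x = i then 1 else 0)"
    by (simp add: coeff_sum coeff_monom)
  also have "\<dots> = int (card {x\<in>X. g x = i})"
    using assms by (simp add: sum.If_cases[of X "\<lambda>x. g x = i"] Int_def)
  finally show ?thesis .
qed

lemma degree_sum_monom:
  assumes "finite X" "x0 \<in> X" "g x0 = D" "\<forall>x\<in>X. g x \<le> D"
  shows "degree (\<Sum>x\<in>X. monom (1::int) (g x)) = D"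
proof (rule antisym)
  show "degree (\<Sum>x\<in>X. monom (1::int) (g x)) \<le> D"
  proof (rule degree_le, intro allI impI)
    fix i assume "D < i"
    then have "{x\<in>X. g x = i} = {}" using assms(4) by force
    then have "card {x\<in>X. g x = i} = 0" by (metis card.empty)
    then show "coeff (\<Sum>x\<in>X. monom (1::int) (g x)) i = 0"
      using coeff_sum_monom_card[OF assms(1)] by simp
  qed
next
  have "{x\<in>X. g x = D} \<noteq> {}" using assms(2,3) by blast
  then have "card {x\<in>X. g x = D} \<noteq> 0" using assms(1) by simp
  then have "coeff (\<Sum>x\<in>X. monom (1::int) (g x)) D \<noteq> 0"
    using coeff_sum_monom_card[OF assms(1)] by simp
  then show "D \<le> degree (\<Sum>x\<in>X. monom (1::int) (g x))" by (rule le_degree)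
qed

lemma nat_aux1: "(a::nat) + b + c \<le> e \<Longrightarrow> a \<le> e - c - b" by arith
lemma nat_aux2: "(a::nat) + b + c = e \<Longrightarrow> a = e - c - b" by arith

context EG begin

lemma cardV1: "card V \<ge> 1"
proof -
  have "V \<noteq> {}" using sV by auto
  then show ?thesis using finV by (simp add: Suc_leI card_gt_0_iff)
qed

lemma PF_single: assumes f: "f \<in> PF" and x: "x \<in> V - {s}"
  shows "f x \<le> card E"
proof -
  have a: "\<forall>S. S \<subseteq> V - {s} \<and> S \<noteq> {} \<longrightarrow> (\<exists>v\<in>S. f v < card {e\<in>E. head e = v \<and> tail e \<notin> S})"
    using f by (simp add: parking_functions_def)
  have "\<exists>v\<in>{x}. f v < card {e\<in>E. head e = v \<and> tail e \<notin> {x}}" using spec[OF a, of "{x}"] x by simp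
  then have "f x < card {e\<in>E. head e = x \<and> tail e \<notin> {x}}" by simp
  moreover have "card {e\<in>E. head e = x \<and> tail e \<notin> {x}} \<le> card E" using finE by (intro card_mono) auto
  ultimately show ?thesis by simp
qed

lemma PF_zero: "f \<in> PF \<Longrightarrow> x \<notin> V - {s} \<Longrightarrow> f x = 0"
  by (simp add: parking_functions_def)

lemma PF_fin: "finite PF"
proof -
  define Fs where "Fs = {f. \<forall>x. (x \<in> V - {s} \<longrightarrow> f x \<in> {..card E}) \<and> (x \<notin> V - {s} \<longrightarrow> f x = (0::nat))}"
  have "PF \<subseteq> Fs"
  proof
    fix f assume f: "f \<in> PF"
    show "f \<in> Fs" unfolding Fs_def using PF_single[OF f] PF_zero[OF f] by simp
  qed
  moreover have "finite Fs" unfolding Fs_def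
    by (rule finite_set_of_finite_funs) (use finV in simp, simp)
  ultimately show ?thesis by (rule finite_subset)
qed

lemma park_degree:
  "int (degree (park V E tail head s)) = int (card E) - int (card V) + 1 - int m"
proof -
  define D where "D = card E - m - (card V - 1)"
  obtain f0 where f0: "f0 \<in> PF" "level f0 + (card V - 1) + m = card E" using park_max by blast
  have le: "\<forall>f\<in>PF. level f \<le> D"
  proof
    fix f assume "f \<in> PF"
    from park_bound[OF this] show "level f \<le> D" unfolding D_def by (rule nat_aux1)
  qed
  have eqD: "level f0 = D" using f0(2) unfolding D_def by (rule nat_aux2)
  have "degree (\<Sum>f\<in>PF. monom (1::int) (level f)) = D"
    by (rule degree_sum_monom[OF PF_fin f0(1) eqD le])
  moreover have "park V E tail head s = (\<Sum>f\<in>PF. monom (1::int) (level f))"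
    unfolding park_def level_def by simp
  ultimately have "degree (park V E tail head s) = D" by simp
  moreover have "card V - 1 + m \<le> card E" using f0(2) by simp
  ultimately show ?thesis using cardV1 unfolding D_def by simp
qed

end

context EG begin

definition avail :: "'e list \<Rightarrow> 'e set \<Rightarrow> 'v set \<Rightarrow> 'e list" where
  "avail es A R = filter (\<lambda>e. e \<in> A \<and> tail e \<in> R \<and> head e \<notin> R) es"

definition stp :: "'e list \<Rightarrow> 'e set \<Rightarrow> 'v set \<times> 'e set \<Rightarrow> 'v set \<times> 'e set" where
  "stp es A P = (case avail es A (fst P) of [] \<Rightarrow> P | e # _ \<Rightarrow> (insert (head e) (fst P), insert e (snd P)))"

primrec proc :: "'e list \<Rightarrow> 'e set \<Rightarrow> nat \<Rightarrow> 'v set \<times> 'e set" where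
  "proc es A 0 = ({s}, {})"
| "proc es A (Suc k) = stp es A (proc es A k)"

lemma avail_hd: "avail es A R = e # r \<Longrightarrow> e \<in> A \<and> tail e \<in> R \<and> head e \<notin> R \<and> e \<in> set es"
proof -
  assume a: "avail es A R = e # r"
  then have "e \<in> set (avail es A R)" by simp
  then show ?thesis unfolding avail_def by simp
qed

definition inv :: "'e set \<Rightarrow> 'v set \<times> 'e set \<Rightarrow> bool" where
  "inv A P \<longleftrightarrow> s \<in> fst P \<and> fst P \<subseteq> V \<and> snd P \<subseteq> A \<and> head ` snd P = fst P - {s} \<and>
     inj_on head (snd P) \<and> (\<forall>v\<in>fst P. (s, v) \<in> (arcrel (snd P) tail head)\<^sup>*)"

lemma arcrel_mono: "T \<subseteq> T' \<Longrightarrow> arcrel T tail head \<subseteq> arcrel T' tail head"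
  unfolding arcrel_def by auto

lemma inv_stp: assumes A: "A \<subseteq> E" and I: "inv A P" shows "inv A (stp es A P)"
proof (cases "avail es A (fst P)")
  case Nil then show ?thesis using I unfolding stp_def by simp
next
  case (Cons e r)
  obtain R T where P: "P = (R, T)" by (cases P)
  have e: "e \<in> A" "tail e \<in> R" "head e \<notin> R" using avail_hd[OF Cons] P by auto
  have st: "stp es A P = (insert (head e) R, insert e T)" unfolding stp_def using Cons P by simp
  have eT: "e \<notin> T" using I e P unfolding inv_def by auto
  have hs: "head e \<noteq> s" using I e P unfolding inv_def by auto
  have hV: "head e \<in> V" using A e headV by auto
  have reach: "\<forall>v\<in>insert (head e) R. (s, v) \<in> (arcrel (insert e T) tail head)\<^sup>*"
  proof
    fix v assume v: "v \<in> insert (head e) R"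
    have mono: "(arcrel T tail head)\<^sup>* \<subseteq> (arcrel (insert e T) tail head)\<^sup>*"
      by (rule rtrancl_mono[OF arcrel_mono]) auto
    have st: "(s, tail e) \<in> (arcrel (insert e T) tail head)\<^sup>*" using I e P mono unfolding inv_def by auto
    show "(s, v) \<in> (arcrel (insert e T) tail head)\<^sup>*"
    proof (cases "v = head e")
      case True
      have "(tail e, head e) \<in> arcrel (insert e T) tail head" unfolding arcrel_def by auto
      then show ?thesis using st True by (auto intro: rtrancl_into_rtrancl)
    next
      case False then show ?thesis using v I P mono unfolding inv_def by auto
    qed
  qed
  have IR: "s \<in> R" "R \<subseteq> V" "T \<subseteq> A" "head ` T = R - {s}" "inj_on head T"
    using I P unfolding inv_def by auto
  have c4: "head ` insert e T = insert (head e) R - {s}" using IR(4) hs by auto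
  have c5: "inj_on head (insert e T)" using IR(4,5) e(3) by auto
  show ?thesis unfolding inv_def st fst_conv snd_conv
    using IR e(1) hV c4 c5 reach by blast
qed

lemma inv_proc: "A \<subseteq> E \<Longrightarrow> inv A (proc es A k)"
proof (induction k)
  case 0 then show ?case unfolding inv_def using sV by simp
next
  case (Suc k) then show ?case using inv_stp by simp
qed

lemma stp_mono: "fst P \<subseteq> fst (stp es A P) \<and> snd P \<subseteq> snd (stp es A P)"
  unfolding stp_def by (auto split: list.split)

lemma proc_mono: "j \<le> k \<Longrightarrow> fst (proc es A j) \<subseteq> fst (proc es A k) \<and> snd (proc es A j) \<subseteq> snd (proc es A k)"
proof (induction k)
  case 0 then show ?case by simp
next
  case (Suc k)
  show ?case
  proof (cases "j = Suc k")
    case True then show ?thesis by simp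
  next
    case False then have "j \<le> k" using Suc.prems by simp
    then show ?thesis using Suc.IH stp_mono[of "proc es A k" es A] by auto
  qed
qed

lemma stp_card: assumes A: "A \<subseteq> E" "inv A P" "avail es A (fst P) \<noteq> []"
  shows "card (fst (stp es A P)) = Suc (card (fst P))"
proof -
  obtain e r where Cons: "avail es A (fst P) = e # r" using assms(3) by (cases "avail es A (fst P)") auto
  have "head e \<notin> fst P" using avail_hd[OF Cons] by simp
  moreover have "finite (fst P)" using assms(2) finV unfolding inv_def by (meson finite_subset)
  ultimately show ?thesis unfolding stp_def using Cons by simp
qed

abbreviation "nn \<equiv> card V - 1"

definition full :: "'e list \<Rightarrow> 'e set \<Rightarrow> bool" where
  "full es A \<longleftrightarrow> fst (proc es A nn) = V"

definition Tr :: "'e list \<Rightarrow> 'e set \<Rightarrow> 'e set" where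
  "Tr es A = snd (proc es A nn)"

lemma avail_ne: assumes "e \<in> A" "tail e \<in> R" "head e \<notin> R" "e \<in> set es"
  shows "avail es A R \<noteq> []"
proof -
  have "e \<in> set (avail es A R)" using assms unfolding avail_def by simp
  then show ?thesis by auto
qed

lemma nostall:
  assumes A: "A \<subseteq> E" and es: "E \<subseteq> set es"
    and ns: "\<forall>R. s \<in> R \<and> R \<subseteq> V \<and> R \<noteq> V \<longrightarrow> (\<exists>e\<in>A. tail e \<in> R \<and> head e \<notin> R)"
  shows "full es A"
proof -
  have "k \<le> nn \<Longrightarrow> card (fst (proc es A k)) = Suc k" for k
  proof (induction k)
    case 0 then show ?case by simp
  next
    case (Suc k)
    have I: "inv A (proc es A k)" by (rule inv_proc[OF A])
    have ck: "card (fst (proc es A k)) = Suc k" using Suc by simp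
    have ne: "fst (proc es A k) \<noteq> V" using ck Suc.prems by auto
    have sR: "s \<in> fst (proc es A k)" "fst (proc es A k) \<subseteq> V" using I unfolding inv_def by auto
    obtain e where e: "e \<in> A" "tail e \<in> fst (proc es A k)" "head e \<notin> fst (proc es A k)"
      using spec[OF ns, of "fst (proc es A k)"] sR ne by blast
    have eS: "e \<in> set es" using e(1) A es by blast
    have "avail es A (fst (proc es A k)) \<noteq> []" by (rule avail_ne[OF e eS])
    then show ?case using stp_card[OF A I] ck by simp
  qed
  then have "card (fst (proc es A nn)) = card V" using cardV1 by simp
  moreover have "fst (proc es A nn) \<subseteq> V" using inv_proc[OF A] unfolding inv_def by blast
  ultimately show ?thesis unfolding full_def using finV card_subset_eq by blast
qed

lemma full_tree: assumes A: "A \<subseteq> E" and f: "full es A"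
  shows "branching E tail head s (Tr es A)" "card (Tr es A) = nn" "Tr es A \<subseteq> A"
proof -
  have I: "inv A (proc es A nn)" by (rule inv_proc[OF A])
  then have IR: "snd (proc es A nn) \<subseteq> A" "head ` snd (proc es A nn) = fst (proc es A nn) - {s}"
    "inj_on head (snd (proc es A nn))"
    "\<forall>v\<in>fst (proc es A nn). (s, v) \<in> (arcrel (snd (proc es A nn)) tail head)\<^sup>*"
    unfolding inv_def by auto
  have "\<forall>e\<in>snd (proc es A nn). (s, head e) \<in> (arcrel (snd (proc es A nn)) tail head)\<^sup>*"
    using IR(2,4) by blast
  moreover have "s \<notin> head ` snd (proc es A nn)" using IR(2) by blast
  ultimately show "branching E tail head s (Tr es A)" using A IR unfolding branching_def Tr_def
    by blast
  have "card (Tr es A) = card (head ` Tr es A)" using IR(3) unfolding Tr_def by (simp add: card_image)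
  also have "head ` Tr es A = V - {s}" using IR(2) f unfolding Tr_def full_def by simp
  also have "card (V - {s}) = nn" using sV finV by simp
  finally show "card (Tr es A) = nn" .
  show "Tr es A \<subseteq> A" using I unfolding inv_def Tr_def by simp
qed

end

context EG begin

abbreviation "rk A \<equiv> branching_rank E tail head s A"

lemma branch_heads: assumes b: "branching E tail head s B"
  shows "head ` B \<subseteq> V - {s}" "card B = card (head ` B)"
proof -
  show "head ` B \<subseteq> V - {s}" using b headV unfolding branching_def by auto
  show "card B = card (head ` B)" using b unfolding branching_def by (simp add: card_image)
qed

lemma branch_card: assumes b: "branching E tail head s B" shows "card B \<le> nn"
proof -
  have "card (head ` B) \<le> card (V - {s})" using branch_heads(1)[OF b] finV by (intro card_mono) auto
  then show ?thesis using branch_heads(2)[OF b] sV finV by simp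
qed

lemma rk_set_fin: "A \<subseteq> E \<Longrightarrow> finite {B. B \<subseteq> A \<and> branching E tail head s B}"
proof -
  assume A: "A \<subseteq> E"
  have "{B. B \<subseteq> A \<and> branching E tail head s B} \<subseteq> Pow A" by auto
  moreover have "finite (Pow A)" using A finE by (meson finite_Pow_iff finite_subset)
  ultimately show ?thesis by (rule finite_subset)
qed

lemma empty_branch: "branching E tail head s {}" unfolding branching_def by simp

lemma rk_le: assumes A: "A \<subseteq> E" shows "rk A \<le> nn"
  unfolding branching_rank_def
  using rk_set_fin[OF A] empty_branch branch_card by (subst Max_le_iff) auto

lemma rk_full: assumes A: "A \<subseteq> E" and f: "full es A" shows "rk A = nn"
proof (rule antisym)
  show "rk A \<le> nn" by (rule rk_le[OF A])
  have "card (Tr es A) \<in> card ` {B. B \<subseteq> A \<and> branching E tail head s B}"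
    using full_tree[OF A f] by (intro imageI) simp
  then have "card (Tr es A) \<le> rk A" unfolding branching_rank_def
    using rk_set_fin[OF A] by (intro Max_ge) auto
  then show "nn \<le> rk A" using full_tree(2)[OF A f] by simp
qed

lemma rk_nn_full: assumes A: "A \<subseteq> E" and es: "E \<subseteq> set es" and r: "rk A = nn"
  shows "full es A"
proof -
  have "rk A \<in> card ` {B. B \<subseteq> A \<and> branching E tail head s B}"
    unfolding branching_rank_def using rk_set_fin[OF A] empty_branch by (intro Max_in) auto
  then obtain B where B: "B \<subseteq> A" "branching E tail head s B" "card B = nn" using r by auto
  have hB: "head ` B = V - {s}"
  proof -
    have "card (head ` B) = card (V - {s})" using branch_heads(2)[OF B(2)] B(3) sV finV by simp
    then show ?thesis using branch_heads(1)[OF B(2)] finV card_subset_eq by (metis finite_Diff)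
  qed
  show ?thesis
  proof (rule nostall[OF A es], intro allI impI)
    fix R assume R: "s \<in> R \<and> R \<subseteq> V \<and> R \<noteq> V"
    then obtain v where v: "v \<in> V" "v \<notin> R" by blast
    then have "v \<in> head ` B" using hB R by auto
    then obtain b where b: "b \<in> B" "head b = v" by blast
    then have "(s, v) \<in> (arcrel B tail head)\<^sup>*" using B(2) unfolding branching_def by auto
    from rtrancl_leave[OF this, of R] R v obtain a c where
      "(a, c) \<in> arcrel B tail head" "a \<in> R" "c \<notin> R" by blast
    then obtain e where "e \<in> B" "tail e \<in> R" "head e \<notin> R" unfolding arcrel_def by blast
    then show "\<exists>e\<in>A. tail e \<in> R \<and> head e \<notin> R" using B(1) by blast
  qed
qed

lemma full_E: assumes es: "E \<subseteq> set es" shows "full es E"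
proof (rule nostall[OF _ es], simp, intro allI impI)
  fix R assume R: "s \<in> R \<and> R \<subseteq> V \<and> R \<noteq> V"
  then show "\<exists>e\<in>E. tail e \<in> R \<and> head e \<notin> R" using leaving[of R] by blast
qed

lemma rkE: "rk E = nn"
proof -
  obtain es where "set es = E" using finE finite_list by blast
  then show ?thesis using rk_full[of E es] full_E by simp
qed

lemma Sp_eq: assumes es: "E \<subseteq> set es"
  shows "{A. A \<subseteq> E \<and> rk A = rk E} = {A. A \<subseteq> E \<and> full es A}"
proof -
  have "A \<subseteq> E \<Longrightarrow> rk A = rk E \<longleftrightarrow> full es A" for A
    using rk_full[of A es] rk_nn_full[of A es] es rkE by auto
  then show ?thesis by auto
qed

end

lemma hd_filter_or:
  "filter (\<lambda>x. P x \<or> Q x) xs \<noteq> [] \<Longrightarrow>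
   hd (filter (\<lambda>x. P x \<or> Q x) xs) = hd (filter P xs) \<or> hd (filter (\<lambda>x. P x \<or> Q x) xs) = hd (filter Q xs)"
  by (induction xs) auto

locale EGes = EG V E tail head s
  for V :: "'v set" and E :: "'e set" and tail head :: "'e \<Rightarrow> 'v" and s :: 'v +
  fixes es :: "'e list"
  assumes es_set: "set es = E"
begin

lemma avail_sub: "B \<subseteq> A \<Longrightarrow> avail es B R = filter (\<lambda>e. e \<in> B) (avail es A R)"
  unfolding avail_def filter_filter by (rule filter_cong) auto

lemma proc_sub_mono:
  assumes A: "A \<subseteq> E" and sub: "snd (proc es A N) \<subseteq> B" "B \<subseteq> A"
  shows "k \<le> N \<Longrightarrow> proc es B k = proc es A k"
proof (induction k)
  case 0 then show ?case by simp
next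
  case (Suc k)
  then have IH: "proc es B k = proc es A k" by simp
  define P where "P = proc es A k"
  have av: "avail es B (fst P) = filter (\<lambda>e. e \<in> B) (avail es A (fst P))" using avail_sub[OF sub(2)] .
  show ?case
  proof (cases "avail es A (fst P)")
    case Nil
    then show ?thesis using IH av unfolding P_def by (simp add: stp_def)
  next
    case (Cons e r)
    have "snd (stp es A P) \<subseteq> snd (proc es A N)" using proc_mono[OF Suc.prems, of es A] unfolding P_def by simp
    moreover have "e \<in> snd (stp es A P)" unfolding stp_def using Cons by simp
    ultimately have eB: "e \<in> B" using sub(1) by blast
    then have "avail es B (fst P) = e # filter (\<lambda>e. e \<in> B) r" using av Cons by simp
    then show ?thesis using IH Cons unfolding P_def by (simp add: stp_def)
  qed
qed

lemma stp_grow: assumes "inv A P" "avail es A (fst P) \<noteq> []" shows "fst (stp es A P) \<noteq> fst P"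
proof -
  obtain e r where Cons: "avail es A (fst P) = e # r" using assms(2) by (cases "avail es A (fst P)") auto
  then have "head e \<notin> fst P" using avail_hd by blast
  then show ?thesis unfolding stp_def using Cons by auto
qed

lemma proc_union:
  assumes A1: "A1 \<subseteq> E" and A2: "A2 \<subseteq> E" and C: "C \<subseteq> E"
    and e1: "\<forall>k\<le>N. proc es A1 k = proc es C k" and e2: "\<forall>k\<le>N. proc es A2 k = proc es C k"
  shows "k \<le> N \<Longrightarrow> proc es (A1 \<union> A2) k = proc es C k"
proof (induction k)
  case 0 then show ?case by simp
next
  case (Suc k)
  then have IH: "proc es (A1 \<union> A2) k = proc es C k" by simp
  define P where "P = proc es C k"
  have p1: "proc es A1 k = P" and p2: "proc es A2 k = P" using e1 e2 Suc.prems unfolding P_def by auto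
  have s1: "stp es A1 P = proc es C (Suc k)" using e1 Suc.prems p1 by (metis proc.simps(2))
  have s2: "stp es A2 P = proc es C (Suc k)" using e2 Suc.prems p2 by (metis proc.simps(2))
  have I1: "inv A1 P" using inv_proc[OF A1] p1 by metis
  have I2: "inv A2 P" using inv_proc[OF A2] p2 by metis
  define Pa where "Pa = (\<lambda>e. e \<in> A1 \<and> tail e \<in> fst P \<and> head e \<notin> fst P)"
  define Pb where "Pb = (\<lambda>e. e \<in> A2 \<and> tail e \<in> fst P \<and> head e \<notin> fst P)"
  have avU: "avail es (A1 \<union> A2) (fst P) = filter (\<lambda>x. Pa x \<or> Pb x) es"
    unfolding avail_def Pa_def Pb_def by (rule filter_cong) auto
  have avA: "avail es A1 (fst P) = filter Pa es" "avail es A2 (fst P) = filter Pb es"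
    unfolding avail_def Pa_def Pb_def by auto
  show ?case
  proof (cases "avail es A1 (fst P)")
    case Nil
    then have "stp es A1 P = P" unfolding stp_def by simp
    then have "stp es A2 P = P" using s1 s2 by simp
    then have N2: "avail es A2 (fst P) = []" using stp_grow[OF I2] by auto
    have "filter (\<lambda>x. Pa x \<or> Pb x) es = []" using Nil N2 avA by (simp add: filter_empty_conv)
    then have "avail es (A1 \<union> A2) (fst P) = []" using avU by simp
    then have "stp es (A1 \<union> A2) P = P" unfolding stp_def by simp
    then show ?thesis using IH s1 \<open>stp es A1 P = P\<close> unfolding P_def by simp
  next
    case (Cons e1 r1)
    have g1: "fst (stp es A1 P) \<noteq> fst P" using stp_grow[OF I1] Cons by simp
    have "avail es A2 (fst P) \<noteq> []"
    proof
      assume "avail es A2 (fst P) = []"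
      then have "stp es A2 P = P" unfolding stp_def by simp
      then show False using g1 s1 s2 by simp
    qed
    then obtain e2 r2 where Cons2: "avail es A2 (fst P) = e2 # r2" by (cases "avail es A2 (fst P)") auto
    have h1: "head e1 \<notin> fst P" using avail_hd[OF Cons] by simp
    have h2: "head e2 \<notin> fst P" using avail_hd[OF Cons2] by simp
    have hT: "head ` snd P \<subseteq> fst P" using I1 unfolding inv_def by auto
    have n1: "e1 \<notin> snd P" using h1 hT by auto
    have n2: "e2 \<notin> snd P" using h2 hT by auto
    have "stp es A1 P = stp es A2 P" using s1 s2 by simp
    then have "insert e1 (snd P) = insert e2 (snd P)"
      using Cons Cons2 by (simp add: stp_def)
    then have e12: "e1 = e2" using n1 n2 by blast
    have "e1 \<in> set (filter Pa es)" using Cons avA by simp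
    then have ne: "filter (\<lambda>x. Pa x \<or> Pb x) es \<noteq> []" by (auto simp: filter_empty_conv)
    have "hd (filter (\<lambda>x. Pa x \<or> Pb x) es) = e1"
      using hd_filter_or[OF ne] Cons Cons2 avA e12 by auto
    then obtain r where "avail es (A1 \<union> A2) (fst P) = e1 # r" using ne avU
      by (metis list.collapse)
    then have "stp es (A1 \<union> A2) P = stp es A1 P" using Cons unfolding stp_def by simp
    then show ?thesis using IH s1 unfolding P_def by simp
  qed
qed

lemma proc_insert_unavail:
  assumes A: "A \<subseteq> E"
    and na: "\<forall>j<N. \<not> (tail e \<in> fst (proc es A j) \<and> head e \<notin> fst (proc es A j))"
  shows "k \<le> N \<Longrightarrow> proc es (insert e A) k = proc es A k"
proof (induction k)
  case 0 then show ?case by simp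
next
  case (Suc k)
  then have IH: "proc es (insert e A) k = proc es A k" by simp
  have nk: "\<not> (tail e \<in> fst (proc es A k) \<and> head e \<notin> fst (proc es A k))" using na Suc.prems by simp
  have "avail es (insert e A) (fst (proc es A k)) = avail es A (fst (proc es A k))"
    unfolding avail_def by (rule filter_cong) (use nk in auto)
  then show ?case using IH by (simp add: stp_def)
qed

lemma proc_insert_pick:
  assumes esd: "es = nt @ ts" and e: "e \<in> set nt" and B: "B \<subseteq> set ts" and dis: "set nt \<inter> set ts = {}"
  shows "proc es (insert e B) k = proc es B k \<or> e \<in> snd (proc es (insert e B) k)"
proof (induction k)
  case 0 then show ?case by simp
next
  case (Suc k)
  show ?case
  proof (cases "e \<in> snd (proc es (insert e B) k)")
    case True
    then show ?thesis using proc_mono[of k "Suc k" es "insert e B"] by auto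
  next
    case False
    then have eq: "proc es (insert e B) k = proc es B k" using Suc by simp
    define R where "R = fst (proc es B k)"
    show ?thesis
    proof (cases "tail e \<in> R \<and> head e \<notin> R")
      case True
      have fnt: "filter (\<lambda>x. x \<in> insert e B \<and> tail x \<in> R \<and> head x \<notin> R) nt \<noteq> []"
        using True e by (auto simp: filter_empty_conv)
      have "set (filter (\<lambda>x. x \<in> insert e B \<and> tail x \<in> R \<and> head x \<notin> R) nt) \<subseteq> {e}"
        using B dis by auto
      then have "hd (filter (\<lambda>x. x \<in> insert e B \<and> tail x \<in> R \<and> head x \<notin> R) nt) = e"
        using fnt by (meson hd_in_set singletonD subsetD)
      then have "hd (avail es (insert e B) R) = e" unfolding avail_def esd using fnt by simp
      moreover have "avail es (insert e B) R \<noteq> []" unfolding avail_def esd using fnt by simp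
      ultimately obtain r where "avail es (insert e B) R = e # r" by (metis list.collapse)
      then have "e \<in> snd (stp es (insert e B) (proc es (insert e B) k))"
        using eq unfolding stp_def R_def by simp
      then show ?thesis by simp
    next
      case False
      have "avail es (insert e B) R = avail es B R"
        unfolding avail_def by (rule filter_cong) (use False in auto)
      then show ?thesis using eq unfolding R_def by (simp add: stp_def)
    qed
  qed
qed

lemma proc_insert_pick2:
  assumes esd: "es = nt @ ts" and e: "e \<in> set nt" and B: "B \<subseteq> set ts" and dis: "set nt \<inter> set ts = {}"
    and av: "tail e \<in> fst (proc es B k) \<and> head e \<notin> fst (proc es B k)"
  shows "e \<in> snd (proc es (insert e B) (Suc k))"
proof (cases "e \<in> snd (proc es (insert e B) k)")
  case True
  then show ?thesis using proc_mono[of k "Suc k" es "insert e B"] by auto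
next
  case False
  then have eq: "proc es (insert e B) k = proc es B k" using proc_insert_pick[OF assms(1-4)] by blast
  define R where "R = fst (proc es B k)"
  have fnt: "filter (\<lambda>x. x \<in> insert e B \<and> tail x \<in> R \<and> head x \<notin> R) nt \<noteq> []"
    using av e unfolding R_def by (auto simp: filter_empty_conv)
  have "set (filter (\<lambda>x. x \<in> insert e B \<and> tail x \<in> R \<and> head x \<notin> R) nt) \<subseteq> {e}"
    using B dis by auto
  then have "hd (filter (\<lambda>x. x \<in> insert e B \<and> tail x \<in> R \<and> head x \<notin> R) nt) = e"
    using fnt by (meson hd_in_set singletonD subsetD)
  then have "hd (avail es (insert e B) R) = e" unfolding avail_def esd using fnt by simp
  moreover have "avail es (insert e B) R \<noteq> []" unfolding avail_def esd using fnt by simp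
  ultimately obtain r where "avail es (insert e B) R = e # r" by (metis list.collapse)
  then show ?thesis using eq unfolding R_def by (simp add: stp_def)
qed

end

lemma sum_Pow_power:
  fixes p :: "'a::comm_ring_1"
  assumes "finite X"
  shows "(\<Sum>D\<in>Pow X. p ^ card D) = (p + 1) ^ card X"
proof -
  have "(\<Prod>x\<in>X. p + 1) = (\<Sum>D\<in>Pow X. prod (\<lambda>_. p) D * prod (\<lambda>_. 1) (X - D))"
    by (rule prod_add[OF assms])
  then show ?thesis by simp
qed

context EGes begin

definition Sp :: "'e set set" where "Sp = {A. A \<subseteq> E \<and> full es A}"
definition fib :: "'e set \<Rightarrow> 'e set set" where "fib T = {A \<in> Sp. Tr es A = T}"
definition Mx :: "'e set \<Rightarrow> 'e set" where "Mx T = \<Union> (fib T)"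

lemma Sp_fin: "finite Sp"
proof -
  have "Sp \<subseteq> Pow E" unfolding Sp_def by auto
  then show ?thesis using finE by (meson finite_Pow_iff finite_subset)
qed

lemma fib_fin: "finite (fib T)" using Sp_fin unfolding fib_def by simp

lemma fib_proc: assumes A: "A \<in> fib T" shows "k \<le> nn \<Longrightarrow> proc es T k = proc es A k"
proof -
  assume k: "k \<le> nn"
  have AE: "A \<subseteq> E" and f: "full es A" and t: "Tr es A = T" using A unfolding fib_def Sp_def by auto
  have "T \<subseteq> A" using full_tree(3)[OF AE f] t by simp
  then show ?thesis using proc_sub_mono[OF AE _ _ k, of T] t unfolding Tr_def by simp
qed

lemma fib_eq: assumes T: "T \<in> fib T" and A: "A \<subseteq> E" and eq: "\<forall>k\<le>nn. proc es A k = proc es T k"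
  shows "A \<in> fib T"
proof -
  have "proc es A nn = proc es T nn" using eq by simp
  then show ?thesis using T A unfolding fib_def Sp_def full_def Tr_def by simp
qed

lemma fib_T: assumes A: "A \<in> fib T" shows "T \<in> fib T"
proof -
  have AE: "A \<subseteq> E" and f: "full es A" and t: "Tr es A = T" using A unfolding fib_def Sp_def by auto
  have TE: "T \<subseteq> E" using full_tree(3)[OF AE f] t AE by simp
  have "proc es T nn = proc es A nn" using fib_proc[OF A] by simp
  then show ?thesis using f t TE unfolding fib_def Sp_def full_def Tr_def by simp
qed

lemma fib_E: "A \<in> fib T \<Longrightarrow> A \<subseteq> E" unfolding fib_def Sp_def by auto

lemma Mx_in: assumes T: "T \<in> fib T" shows "Mx T \<in> fib T"
proof -
  have "finite F \<Longrightarrow> F \<noteq> {} \<Longrightarrow> F \<subseteq> fib T \<Longrightarrow> (\<forall>k\<le>nn. proc es (\<Union>F) k = proc es T k)" for F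
  proof (induction F rule: finite_ne_induct)
    case (singleton x) then show ?case using fib_proc by simp
  next
    case (insert x F)
    have x: "x \<in> fib T" using insert by simp
    have IH: "\<forall>k\<le>nn. proc es (\<Union>F) k = proc es T k" using insert by simp
    have xE: "x \<subseteq> E" using fib_E x by blast
    have FE: "\<Union>F \<subseteq> E" using fib_E insert.prems by blast
    have TE: "T \<subseteq> E" using fib_E T by blast
    have "\<forall>k\<le>nn. proc es x k = proc es T k" using fib_proc[OF x] by simp
    then show ?case using proc_union[OF xE FE TE _ IH] by simp
  qed
  then have "\<forall>k\<le>nn. proc es (Mx T) k = proc es T k"
    unfolding Mx_def using fib_fin T by blast
  moreover have "Mx T \<subseteq> E" unfolding Mx_def using fib_E by blast
  ultimately show ?thesis using fib_eq[OF T] by blast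
qed

lemma fib_char: assumes T: "T \<in> fib T" shows "fib T = {A. T \<subseteq> A \<and> A \<subseteq> Mx T}"
proof (intro set_eqI iffI)
  fix A assume A: "A \<in> fib T"
  have AE: "A \<subseteq> E" and f: "full es A" and t: "Tr es A = T" using A unfolding fib_def Sp_def by auto
  have "T \<subseteq> A" using full_tree(3)[OF AE f] t by simp
  moreover have "A \<subseteq> Mx T" unfolding Mx_def using A by blast
  ultimately show "A \<in> {A. T \<subseteq> A \<and> A \<subseteq> Mx T}" by simp
next
  fix A assume A: "A \<in> {A. T \<subseteq> A \<and> A \<subseteq> Mx T}"
  have M: "Mx T \<in> fib T" by (rule Mx_in[OF T])
  have ME: "Mx T \<subseteq> E" using fib_E M by blast
  have tM: "Tr es (Mx T) = T" using M unfolding fib_def by simp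
  have "\<forall>k\<le>nn. proc es A k = proc es (Mx T) k"
    using proc_sub_mono[OF ME, of nn A] tM A unfolding Tr_def by auto
  moreover have "\<forall>k\<le>nn. proc es T k = proc es (Mx T) k" using fib_proc[OF M] by simp
  ultimately show "A \<in> fib T" using fib_eq[OF T] A ME by auto
qed

lemma picked_avail: "e \<in> snd (proc es A k) \<Longrightarrow> \<exists>j<k. tail e \<in> fst (proc es A j) \<and> head e \<notin> fst (proc es A j)"
proof (induction k)
  case 0 then show ?case by simp
next
  case (Suc k)
  show ?case
  proof (cases "e \<in> snd (proc es A k)")
    case True then show ?thesis using Suc.IH by (meson less_SucI)
  next
    case False
    show ?thesis
    proof (cases "avail es A (fst (proc es A k))")
      case Nil then show ?thesis using Suc.prems False by (simp add: stp_def)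
    next
      case (Cons e' r)
      then have "e = e'" using Suc.prems False by (simp add: stp_def)
      then show ?thesis using avail_hd[OF Cons] by blast
    qed
  qed
qed

lemma Mx_lower: assumes T: "T \<in> fib T" shows "m \<le> card (Mx T - T)"
proof -
  have TE: "T \<subseteq> E" using fib_E T by blast
  have fT: "full es T" and tT: "Tr es T = T" using T unfolding fib_def Sp_def by auto
  define R where "R j = fst (proc es T j)" for j
  have cross: "\<exists>j<nn. tail e \<in> R j \<and> head e \<notin> R j" if e: "e \<in> E - (Mx T - T)" for e
  proof (cases "e \<in> T")
    case True
    then have "e \<in> snd (proc es T nn)" using tT unfolding Tr_def by simp
    then show ?thesis using picked_avail unfolding R_def by blast
  next
    case False
    then have eM: "e \<notin> Mx T" using e by blast
    show ?thesis
    proof (rule ccontr)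
      assume "\<not> ?thesis"
      then have "\<forall>j<nn. \<not> (tail e \<in> fst (proc es T j) \<and> head e \<notin> fst (proc es T j))" unfolding R_def by blast
      then have "\<forall>k\<le>nn. proc es (insert e T) k = proc es T k"
        using proc_insert_unavail[OF TE] by blast
      moreover have "insert e T \<subseteq> E" using e TE by blast
      ultimately have "insert e T \<in> fib T" using fib_eq[OF T] by blast
      then have "e \<in> Mx T" unfolding Mx_def by blast
      then show False using eM by simp
    qed
  qed
  define \<tau> where "\<tau> v = (LEAST k. v \<in> R k)" for v
  have RV: "R nn = V" using fT unfolding full_def R_def by simp
  have fw: "\<forall>e\<in>E - (Mx T - T). \<tau> (tail e) < \<tau> (head e)"
  proof
    fix e assume e: "e \<in> E - (Mx T - T)"
    obtain j where j: "j < nn" "tail e \<in> R j" "head e \<notin> R j" using cross[OF e] by blast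
    have t: "\<tau> (tail e) \<le> j" unfolding \<tau>_def using j(2) by (rule Least_le)
    have hin: "head e \<in> R (\<tau> (head e))" unfolding \<tau>_def
      by (rule LeastI[of _ nn]) (use RV e headV in auto)
    have "\<not> \<tau> (head e) \<le> j"
    proof
      assume "\<tau> (head e) \<le> j"
      then have "R (\<tau> (head e)) \<subseteq> R j" unfolding R_def using proc_mono by blast
      then show False using hin j(3) by blast
    qed
    then show "\<tau> (tail e) < \<tau> (head e)" using t by simp
  qed
  have "feedback_arc_set E tail head (Mx T - T)"
    unfolding feedback_arc_set_def
  proof
    show "Mx T - T \<subseteq> E" using Mx_in[OF T] fib_E by blast
    show "\<not> has_dicycle (E - (Mx T - T)) tail head" by (rule fwd_acyclic[of _ \<tau>]) (use fw in blast)
  qed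
  then show ?thesis by (rule minfas_le)
qed

lemma fib_sum: assumes T: "T \<in> fib T"
  shows "(\<Sum>A\<in>fib T. [:-1, 1::int:] ^ (card A - nn)) = [:0, 1:] ^ card (Mx T - T)"
proof -
  have M: "Mx T \<in> fib T" by (rule Mx_in[OF T])
  have ME: "Mx T \<subseteq> E" using fib_E M by blast
  have TM: "T \<subseteq> Mx T" using fib_char[OF T] T by blast
  have fM: "finite (Mx T)" using ME finE finite_subset by blast
  have fT: "finite T" using TM fM finite_subset by blast
  have cT: "card T = nn" using T full_tree(2)[of T es] fib_E[OF T] unfolding fib_def Sp_def by auto
  have img: "fib T = (\<lambda>D. T \<union> D) ` Pow (Mx T - T)"
  proof -
    have "{A. T \<subseteq> A \<and> A \<subseteq> Mx T} = (\<lambda>D. T \<union> D) ` Pow (Mx T - T)"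
    proof (intro set_eqI iffI)
      fix A assume "A \<in> {A. T \<subseteq> A \<and> A \<subseteq> Mx T}"
      then have "A = T \<union> (A - T)" "A - T \<in> Pow (Mx T - T)" by auto
      then show "A \<in> (\<lambda>D. T \<union> D) ` Pow (Mx T - T)" by blast
    next
      fix A assume "A \<in> (\<lambda>D. T \<union> D) ` Pow (Mx T - T)"
      then show "A \<in> {A. T \<subseteq> A \<and> A \<subseteq> Mx T}" using TM by auto
    qed
    then show ?thesis using fib_char[OF T] by simp
  qed
  have inj: "inj_on (\<lambda>D. T \<union> D) (Pow (Mx T - T))"
    by (rule inj_onI) blast
  have "(\<Sum>A\<in>fib T. [:-1, 1::int:] ^ (card A - nn)) =
        (\<Sum>D\<in>Pow (Mx T - T). [:-1, 1::int:] ^ (card (T \<union> D) - nn))"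
    unfolding img by (subst sum.reindex[OF inj]) simp
  also have "\<dots> = (\<Sum>D\<in>Pow (Mx T - T). [:-1, 1::int:] ^ card D)"
  proof (rule sum.cong)
    fix D assume D: "D \<in> Pow (Mx T - T)"
    have fD: "finite D" using D fM finite_subset by auto
    have "card (T \<union> D) = card T + card D" using D fT fD by (intro card_Un_disjoint) auto
    then show "[:-1, 1::int:] ^ (card (T \<union> D) - nn) = [:-1, 1::int:] ^ card D" using cT by simp
  qed simp
  also have "\<dots> = ([:-1, 1::int:] + 1) ^ card (Mx T - T)"
    by (rule sum_Pow_power) (use fM in simp)
  also have "[:-1, 1::int:] + 1 = [:0, 1:]" by (simp add: one_pCons)
  finally show ?thesis .
qed

end

lemma hd_filter_sorted:
  "sorted (map f xs) \<Longrightarrow> x \<in> set (filter P xs) \<Longrightarrow> f (hd (filter P xs)) \<le> (f x :: nat)"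
  by (induction xs) auto

context EG begin

lemma stp_fst: "fst (stp es A P) = fst P \<or> (\<exists>e. fst (stp es A P) = insert (head e) (fst P))"
  unfolding stp_def by (auto split: list.split)

lemma upper_exists:
  "\<exists>es. set es = E \<and> (\<exists>T. EGes.fib V E tail head s es T = EGes.fib V E tail head s es T \<and>
        T \<in> EGes.fib V E tail head s es T \<and> card (EGes.Mx V E tail head s es T - T) \<le> m)"
proof -
  obtain pos where g: "good pos" and fr: "FR pos = V" using good_full by blast
  have first: "\<forall>v\<in>V - {s}. pos s < pos v" using g unfolding good_def by simp
  define tv where "tv v = (SOME e. e \<in> E \<and> head e = v \<and> pos (tail e) < pos v)" for v
  have tv: "tv v \<in> E \<and> head (tv v) = v \<and> pos (tail (tv v)) < pos v" if "v \<in> V - {s}" for v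
    unfolding tv_def by (rule someI_ex) (use valid[OF fr that] in blast)
  define Ts where "Ts = tv ` (V - {s})"
  have TsE: "Ts \<subseteq> E" unfolding Ts_def using tv by auto
  have injtv: "inj_on tv (V - {s})" by (rule inj_onI) (metis tv)
  have cTs: "card Ts = nn" unfolding Ts_def using card_image[OF injtv] sV finV by simp
  obtain ts0 where ts0: "set ts0 = Ts" using TsE finE finite_list finite_subset by metis
  obtain nt where nt: "set nt = E - Ts" using finE finite_list by (metis finite_Diff)
  define ts where "ts = sort_key (\<lambda>e. pos (head e)) ts0"
  have tsset: "set ts = Ts" unfolding ts_def using ts0 by simp
  have srt: "sorted (map (\<lambda>e. pos (head e)) ts)" unfolding ts_def by (rule sorted_sort_key)
  define es where "es = nt @ ts"
  have esset: "set es = E" unfolding es_def using nt tsset TsE by auto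
  interpret X: EGes V E tail head s es by unfold_locales (rule esset)
  have dis: "set nt \<inter> set ts = {}" using nt tsset by auto
  define R where "R k = fst (proc es Ts k)" for k
  have RV: "R k \<subseteq> V" for k using inv_proc[OF TsE] unfolding inv_def R_def by blast
  have sR: "s \<in> R k" for k using inv_proc[OF TsE] unfolding inv_def R_def by blast
  have leave: "\<exists>e\<in>Ts. tail e \<in> Q \<and> head e \<notin> Q \<and> (\<forall>v\<in>V - Q. pos (head e) \<le> pos v)"
    if Q: "s \<in> Q" "Q \<subseteq> V" "Q \<noteq> V" for Q
  proof -
    have fin: "finite (V - Q)" using finV by simp
    have ne: "V - Q \<noteq> {}" using Q by auto
    have "Min (pos ` (V - Q)) \<in> pos ` (V - Q)" using fin ne by (intro Min_in) auto
    then obtain w where w: "w \<in> V - Q" "pos w = Min (pos ` (V - Q))" by auto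
    then have wmin: "\<forall>v\<in>V - Q. pos w \<le> pos v" using fin by auto
    have ws: "w \<in> V - {s}" using w Q by auto
    have t: "tv w \<in> E" "head (tv w) = w" "pos (tail (tv w)) < pos w" using tv[OF ws] by auto
    have "tail (tv w) \<in> Q"
    proof (rule ccontr)
      assume "tail (tv w) \<notin> Q"
      then have "tail (tv w) \<in> V - Q" using t(1) tailV by auto
      then have "pos w \<le> pos (tail (tv w))" using wmin by blast
      then show False using t(3) by simp
    qed
    moreover have "tv w \<in> Ts" unfolding Ts_def using ws by blast
    ultimately show ?thesis using t w wmin by auto
  qed
  have fullTs: "full es Ts"
    by (rule nostall[OF TsE]) (use esset leave in blast)+
  have TrTs: "Tr es Ts = Ts"
  proof -
    have "Tr es Ts \<subseteq> Ts" using full_tree(3)[OF TsE fullTs] .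
    moreover have "card (Tr es Ts) = card Ts" using full_tree(2)[OF TsE fullTs] cTs by simp
    moreover have "finite Ts" using TsE finE finite_subset by blast
    ultimately show ?thesis using card_subset_eq by blast
  qed
  have Tsfib: "Ts \<in> X.fib Ts" unfolding X.fib_def X.Sp_def using TsE fullTs TrTs by simp
  have invp: "\<forall>u\<in>R k. \<forall>v\<in>V - R k. pos u \<le> pos v" for k
  proof (induction k)
    case 0 then show ?case using first unfolding R_def by (auto intro: less_imp_le)
  next
    case (Suc k)
    show ?case
    proof (cases "avail es Ts (R k)")
      case Nil then show ?thesis using Suc unfolding R_def by (simp add: stp_def)
    next
      case (Cons t r)
      have Rs: "R (Suc k) = insert (head t) (R k)" using Cons unfolding R_def by (simp add: stp_def)
      have th: "tail t \<in> R k" "head t \<notin> R k" "t \<in> Ts" using avail_hd[OF Cons] by auto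
      have key: "pos (head t) \<le> pos v" if v: "v \<in> V - R k" for v
      proof -
        have "R k \<noteq> V" using th(2) th(3) TsE headV by blast
        then obtain e where e: "e \<in> Ts" "tail e \<in> R k" "head e \<notin> R k" "\<forall>v\<in>V - R k. pos (head e) \<le> pos v"
          using leave[OF sR RV] by blast
        have "e \<in> set (filter (\<lambda>e. e \<in> Ts \<and> tail e \<in> R k \<and> head e \<notin> R k) ts)"
          using e tsset by simp
        moreover have "avail es Ts (R k) = filter (\<lambda>e. e \<in> Ts \<and> tail e \<in> R k \<and> head e \<notin> R k) ts"
          unfolding avail_def es_def using nt by auto
        ultimately have "pos (head (hd (avail es Ts (R k)))) \<le> pos (head e)"
          using hd_filter_sorted[OF srt] by metis
        then have "pos (head t) \<le> pos (head e)" using Cons by simp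
        moreover have "pos (head e) \<le> pos v" using e(4) v by blast
        ultimately show ?thesis by simp
      qed
      show ?thesis unfolding Rs
      proof (intro ballI)
        fix u v assume u: "u \<in> insert (head t) (R k)" and v: "v \<in> V - insert (head t) (R k)"
        then have v': "v \<in> V - R k" by blast
        show "pos u \<le> pos v"
        proof (cases "u = head t")
          case True then show ?thesis using key[OF v'] by simp
        next
          case False then have "u \<in> R k" using u by blast
          then show ?thesis using Suc v' by blast
        qed
      qed
    qed
  qed
  have "X.Mx Ts - Ts \<subseteq> Bw pos"
  proof
    fix e assume e: "e \<in> X.Mx Ts - Ts"
    have eE: "e \<in> E" using X.Mx_in[OF Tsfib] X.fib_E e by blast
    show "e \<in> Bw pos"
    proof (rule ccontr)
      assume "e \<notin> Bw pos"
      then have lt: "pos (tail e) < pos (head e)" using eE unfolding Bw_def by simp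
      have hV: "head e \<in> V" "tail e \<in> V" using eE headV tailV by auto
      have RnV: "R nn = V" using fullTs unfolding full_def R_def by simp
      define k where "k = (LEAST k. head e \<in> R k)"
      have hk: "head e \<in> R k" unfolding k_def by (rule LeastI[of _ nn]) (use RnV hV in simp)
      have knn: "k \<le> nn" unfolding k_def by (rule Least_le) (use RnV hV in simp)
      have hs: "head e \<noteq> s"
      proof
        assume "head e = s"
        then show False using lt first hV by (metis DiffI less_asym singletonD)
      qed
      have "k \<noteq> 0"
      proof
        assume "k = 0" then have "R k = {s}" unfolding R_def by simp
        then show False using hk hs by simp
      qed
      then obtain j where kj: "k = Suc j" by (cases k) auto
      have hj: "head e \<notin> R j" using not_less_Least[of j "\<lambda>k. head e \<in> R k"] kj unfolding k_def by simp
      have tk: "tail e \<in> R k"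
      proof (rule ccontr)
        assume "tail e \<notin> R k"
        then have "pos (head e) \<le> pos (tail e)" using invp[of k] hk hV by blast
        then show False using lt by simp
      qed
      have "R (Suc j) = R j \<or> (\<exists>x. R (Suc j) = insert (head x) (R j))"
        unfolding R_def using stp_fst by simp
      then have "tail e \<in> R j"
      proof
        assume "R (Suc j) = R j" then show ?thesis using tk kj by simp
      next
        assume "\<exists>x. R (Suc j) = insert (head x) (R j)"
        then obtain x where x: "R (Suc j) = insert (head x) (R j)" by blast
        then have "head e = head x" using hk hj kj by auto
        moreover have "tail e \<noteq> head e" using lt by auto
        ultimately show ?thesis using tk kj x by auto
      qed
      then have "e \<in> snd (proc es (insert e Ts) (Suc j))"
        using X.proc_insert_pick2[OF es_def _ _ dis, of e Ts j] e nt tsset eE hj unfolding R_def by auto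
      moreover have "Suc j \<le> nn" using knn kj by simp
      ultimately have eT: "e \<in> Tr es (insert e Ts)" unfolding Tr_def using proc_mono by blast
      have "Ts \<subseteq> X.Mx Ts" using Tsfib unfolding X.Mx_def by blast
      moreover have "e \<in> X.Mx Ts" using e by blast
      ultimately have "insert e Ts \<in> X.fib Ts" unfolding X.fib_char[OF Tsfib] by blast
      then have "Tr es (insert e Ts) = Ts" unfolding X.fib_def by simp
      then show False using eT e by simp
    qed
  qed
  then have "card (X.Mx Ts - Ts) \<le> card (Bw pos)" using finE unfolding Bw_def
    by (intro card_mono) auto
  then have "card (X.Mx Ts - Ts) \<le> m" using g unfolding good_def by simp
  then show ?thesis using esset Tsfib by blast
qed

end

context EG begin

lemma greedoid_part:
  "(\<forall>i < m. coeff (greedoid_poly_branching E tail head s) i = 0) \<and>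
   coeff (greedoid_poly_branching E tail head s) m \<noteq> 0"
proof -
  obtain es T0 where esset: "set es = E" and T0: "T0 \<in> EGes.fib V E tail head s es T0"
    and T0m: "card (EGes.Mx V E tail head s es T0 - T0) \<le> m"
    using upper_exists by blast
  interpret X: EGes V E tail head s es by unfold_locales (rule esset)
  define k where "k T = card (X.Mx T - T)" for T
  define TT where "TT = Tr es ` X.Sp"
  have SpE: "{A. A \<subseteq> E \<and> rk A = rk E} = X.Sp"
    unfolding X.Sp_def using Sp_eq[of es] esset by simp
  have "greedoid_poly_branching E tail head s = (\<Sum>A\<in>X.Sp. [:-1, 1:] ^ (card A - rk A))"
    unfolding greedoid_poly_branching_def SpE ..
  also have "\<dots> = (\<Sum>A\<in>X.Sp. [:-1, 1:] ^ (card A - nn))"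
    by (rule sum.cong) (use rk_full in \<open>auto simp: X.Sp_def\<close>)
  also have "\<dots> = (\<Sum>T\<in>TT. \<Sum>A\<in>{x\<in>X.Sp. Tr es x = T}. [:-1, 1:] ^ (card A - nn))"
    unfolding TT_def by (rule sum.image_gen[OF X.Sp_fin])
  also have "\<dots> = (\<Sum>T\<in>TT. monom 1 (k T))"
  proof (rule sum.cong)
    fix T assume T: "T \<in> TT"
    then obtain A where A: "A \<in> X.Sp" "Tr es A = T" unfolding TT_def by blast
    then have "A \<in> X.fib T" unfolding X.fib_def by simp
    then have Tf: "T \<in> X.fib T" by (rule X.fib_T)
    have "(\<Sum>A\<in>{x\<in>X.Sp. Tr es x = T}. [:-1, 1::int:] ^ (card A - nn)) = (\<Sum>A\<in>X.fib T. [:-1, 1::int:] ^ (card A - nn))"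
      unfolding X.fib_def ..
    also have "\<dots> = [:0, 1:] ^ k T" unfolding k_def by (rule X.fib_sum[OF Tf])
    also have "\<dots> = monom 1 (k T)" by (simp add: monom_altdef)
    finally show "(\<Sum>A\<in>{x\<in>X.Sp. Tr es x = T}. [:-1, 1::int:] ^ (card A - nn)) = monom 1 (k T)" .
  qed simp
  finally have gp: "greedoid_poly_branching E tail head s = (\<Sum>T\<in>TT. monom 1 (k T))" .
  have finTT: "finite TT" unfolding TT_def using X.Sp_fin by simp
  have lower: "m \<le> k T" if TT: "T \<in> TT" for T
  proof -
    obtain A where A: "A \<in> X.Sp" "Tr es A = T" using TT unfolding TT_def by blast
    then have "A \<in> X.fib T" unfolding X.fib_def by simp
    then have Tf: "T \<in> X.fib T" by (rule X.fib_T)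
    then show ?thesis unfolding k_def by (rule X.Mx_lower)
  qed
  have T0TT: "T0 \<in> TT" using T0 unfolding X.fib_def TT_def by force
  have kT0: "k T0 = m" using lower[OF T0TT] T0m unfolding k_def by simp
  have c: "coeff (greedoid_poly_branching E tail head s) i = int (card {T\<in>TT. k T = i})" for i
    unfolding gp by (rule coeff_sum_monom_card[OF finTT])
  show ?thesis
  proof (intro conjI allI impI)
    fix i assume i: "i < m"
    have "{T\<in>TT. k T = i} = {}" using lower i by force
    then have "card {T\<in>TT. k T = i} = 0" by (metis card.empty)
    then show "coeff (greedoid_poly_branching E tail head s) i = 0" using c[of i] by simp
  next
    have "T0 \<in> {T\<in>TT. k T = m}" using T0TT kT0 by simp
    then have "card {T\<in>TT. k T = m} \<noteq> 0" using finTT by auto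
    then show "coeff (greedoid_poly_branching E tail head s) m \<noteq> 0" using c[of m] by simp
  qed
qed

end

theorem theorem1p5:
  fixes V :: "'v set" and E :: "'e set" and tail head :: "'e \<Rightarrow> 'v" and s :: 'v
  assumes "digraph V E tail head"
    and "connected_digraph V E tail head"
    and "eulerian V E tail head"
    and "s \<in> V"
  shows "int (degree (park V E tail head s)) =
           int (card E) - int (card V) + 1 - int (minfas E tail head) \<and>
         (\<forall>i < minfas E tail head. coeff (greedoid_poly_branching E tail head s) i = 0) \<and>
         coeff (greedoid_poly_branching E tail head s) (minfas E tail head) \<noteq> 0"
proof -
  interpret EG V E tail head s by unfold_locales (use assms in auto)
  show ?thesis using park_degree greedoid_part by simp
qed


end
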